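(* Let $\ell$ be an odd prime and fix $t\in\mathbb{Z}$. For $m\in\mathbb{Z}_{\ge1}$ define \[ \widetilde{\psi}_t^{(\ell)}(m) := \frac{1}{\varphi(m^2)} \sum_{\substack{n \bmod m^2\\ (n,m)=1}} \psi_{t^2 - 4\ell n}(m). \] Then the function $m\mapsto \widetilde{\psi}_t^{(\ell)}(m)$ is multiplicative.
   Context: For an integer $D=dL^2$ with $d$ a fundamental discriminant and $L\in\mathbb{Z}_{\ge0}$, $\psi_D(m):=\big(\tfrac{d}{m/(m,L)}\big)$ is a Kronecker symbol, with the convention $\psi_0(m)=1$. Here $\varphi$ is Euler's totient function, and the sum runs over residue classes $n$ modulo $m^2$ coprime to $m$. *)

theory Defs
  imports "HOL-Number_Theory.Number_Theory" "HOL-Computational_Algebra.Squarefree"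
begin

definition fund_disc :: "int \<Rightarrow> bool" where
  "fund_disc d \<longleftrightarrow>
     (d mod 4 = 1 \<and> squarefree d) \<or>
     (\<exists>k. d = 4 * k \<and> (k mod 4 = 2 \<or> k mod 4 = 3) \<and> squarefree k)"

definition kron_prime :: "int \<Rightarrow> nat \<Rightarrow> int" where
  "kron_prime a p =
     (if p = 2 then (if even a then 0 else if a mod 8 = 1 \<or> a mod 8 = 7 then 1 else -1)
      else Legendre a (int p))"

definition kronecker :: "int \<Rightarrow> nat \<Rightarrow> int" where
  "kronecker a m = (\<Prod>p\<in>prime_factors m. kron_prime a p ^ multiplicity p m)"

definition psi :: "int \<Rightarrow> nat \<Rightarrow> int" where
  "psi D m = (if D = 0 then 1 else
     (let (d, L) = (THE (d, L). fund_disc d \<and> L \<ge> 0 \<and> D = d * L ^ 2)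
      in kronecker d (m div gcd m (nat L))))"

definition psi_tilde :: "nat \<Rightarrow> int \<Rightarrow> nat \<Rightarrow> real" where
  "psi_tilde l t m =
     (\<Sum>n \<in> {n \<in> {0..<m^2}. coprime n m}. real_of_int (psi (t^2 - 4 * int l * int n) m))
       / real (totient (m^2))"

end

theory Submission
  imports Defs
begin


lemma fd_nz: "fund_disc d \<Longrightarrow> d \<noteq> 0"
  unfolding fund_disc_def by auto

lemma fd_cases:
  assumes "fund_disc d"
  obtains "d mod 4 = 1" "squarefree d"
        | k where "d = 4 * k" "k mod 4 = 2 \<or> k mod 4 = 3" "squarefree k"
  using assms unfolding fund_disc_def by blast

lemma sqf_not_4: "squarefree (k::int) \<Longrightarrow> \<not> 4 dvd k"
proof
  assume "squarefree k" "4 dvd k"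
  then have "(2::int)^2 dvd k" by simp
  with \<open>squarefree k\<close> have "(2::int) dvd 1" by (rule squarefreeD)
  then show False by simp
qed

lemma fd_odd_prime_sq:
  assumes "fund_disc d" "prime (p::int)" "odd p"
  shows "\<not> p^2 dvd d"
proof
  assume h: "p^2 dvd d"
  have np: "\<not> p dvd 1" using assms(2) not_prime_unit by blast
  from assms(1) show False
  proof (cases rule: fd_cases)
    case 1
    then show False using h np squarefreeD by blast
  next
    case (2 k)
    have "coprime (p^2) (2^2)" using assms(3) by (simp only: coprime_power_left_iff coprime_power_right_iff) simp
    then have "p^2 dvd k" using h 2(1) by (simp add: coprime_dvd_mult_right_iff)
    then show False using 2(3) np squarefreeD by blast
  qed
qed

lemma fd_16: "fund_disc d \<Longrightarrow> \<not> 16 dvd d"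
  apply (erule fd_cases)
   apply presburger
  using sqf_not_4 by fastforce


lemma sq_dvd_fd:
  assumes "fund_disc d" "(u::int) > 0" "u^2 dvd d"
  shows "u = 1 \<or> u = 2"
  using assms(1)
proof (cases rule: fd_cases)
  case 1
  then have "u dvd 1" using assms(3) squarefreeD by blast
  then show ?thesis using assms(2) by simp
next
  case (2 k)
  show ?thesis
  proof (cases "even u")
    case False
    then have "coprime (u^2) (2^2)" by (simp only: coprime_power_left_iff coprime_power_right_iff) simp
    then have "u^2 dvd k" using assms(3) 2(1) by (simp add: coprime_dvd_mult_right_iff)
    then have "u dvd 1" using 2(3) squarefreeD by blast
    then show ?thesis using assms(2) by simp
  next
    case True
    then obtain w where w: "u = 2 * w" by blast
    then have "4 * w^2 dvd 4 * k" using assms(3) 2(1) by (simp add: power2_eq_square mult_ac)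
    then have "w^2 dvd k" by simp
    then have "w dvd 1" using 2(3) squarefreeD by blast
    then show ?thesis using assms(2) w by simp
  qed
qed

lemma fd_not_4: "fund_disc d \<Longrightarrow> fund_disc (4 * d) \<Longrightarrow> False"
  unfolding fund_disc_def by auto

lemma fd_unique:
  assumes "fund_disc d" "fund_disc d'" "(L::int) > 0" "L' > 0" "d * L^2 = d' * L'^2"
  shows "d = d' \<and> L = L'"
proof -
  define g where "g = gcd L L'"
  have g0: "g > 0" using assms(3) by (simp add: g_def)
  obtain u u' where u: "L = g * u" "L' = g * u'" "coprime u u'"
  proof -
    have "\<exists>a' b'. L = a' * g \<and> L' = b' * g \<and> coprime a' b'"
      unfolding g_def by (rule gcd_coprime_exists) (use g0 in \<open>simp add: g_def\<close>)
    then show ?thesis using that by (auto simp: mult.commute)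
  qed
  have up: "u > 0" "u' > 0" using u assms(3,4) g0 by (auto simp: zero_less_mult_iff)
  have "g^2 * (d * u^2) = g^2 * (d' * u'^2)" using assms(5) u by (simp add: power_mult_distrib mult_ac)
  then have e: "d * u^2 = d' * u'^2" using g0 by simp
  have "u^2 dvd d' * u'^2" using e by (metis dvd_triv_right)
  moreover have "coprime (u^2) (u'^2)" using u(3) by simp
  ultimately have "u^2 dvd d'" by (simp add: coprime_dvd_mult_left_iff)
  then have u12: "u = 1 \<or> u = 2" using sq_dvd_fd assms(2) up by blast
  have "u'^2 dvd d * u^2" using e by (metis dvd_triv_right)
  moreover have "coprime (u'^2) (u^2)" using u(3) by (simp add: coprime_commute)
  ultimately have "u'^2 dvd d" by (simp add: coprime_dvd_mult_left_iff)
  then have u12': "u' = 1 \<or> u' = 2" using sq_dvd_fd assms(1) up by blast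
  show ?thesis
  proof (cases "u = 1 \<and> u' = 1")
    case True then show ?thesis using e u by simp
  next
    case False
    then consider "u = 2" "u' = 1" | "u = 1" "u' = 2" | "u = 2" "u' = 2" using u12 u12' by blast
    then show ?thesis
    proof cases
      case 1 then have "d' = 4 * d" using e by simp
      then show ?thesis using fd_not_4 assms(1,2) by blast
    next
      case 2 then have "d = 4 * d'" using e by simp
      then show ?thesis using fd_not_4 assms(1,2) by blast
    next
      case 3 then show ?thesis using u(3) by simp
    qed
  qed
qed

lemma fd_exists:
  assumes "D \<noteq> 0" "D mod 4 = 0 \<or> D mod 4 = 1"
  shows "\<exists>d L. fund_disc d \<and> L > 0 \<and> D = d * L^2"
proof -
  define s where "s = squarefree_part D"
  define q where "q = square_part D"
  have D: "D = s * q^2" unfolding s_def q_def by (rule squarefree_decompose)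
  have sq: "squarefree s" unfolding s_def by simp
  have q0: "q \<noteq> 0" using D assms(1) by auto
  have s4: "\<not> 4 dvd s" using sq sqf_not_4 by blast
  show ?thesis
  proof (cases "s mod 4 = 1")
    case True
    then have "fund_disc s" using sq unfolding fund_disc_def by auto
    moreover have "D = s * \<bar>q\<bar>^2" using D by simp
    ultimately show ?thesis using q0 by (metis zero_less_abs_iff)
  next
    case False
    then have s23: "s mod 4 = 2 \<or> s mod 4 = 3" using s4 by presburger
    have "even q"
    proof (rule ccontr)
      assume "odd q"
      then obtain r where "q = 2*r+1" by (meson oddE)
      then have "q^2 = 4*(r^2+r) + 1" by (simp add: power2_eq_square algebra_simps)
      then have "D = 4 * (s*(r^2+r)) + s" using D by (simp add: algebra_simps)
      then have "D mod 4 = s mod 4" by (simp only:) presburger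
      then show False using s23 assms(2) by linarith
    qed
    then obtain r where r: "q = 2 * r" by blast
    have "fund_disc (4 * s)" using s23 sq unfolding fund_disc_def by auto
    moreover have "D = (4 * s) * \<bar>r\<bar>^2" using D r by (simp add: power_mult_distrib)
    moreover have "\<bar>r\<bar> > 0" using q0 r by simp
    ultimately show ?thesis by blast
  qed
qed


definition valid :: "int \<Rightarrow> bool" where "valid D \<longleftrightarrow> D mod 4 = 0 \<or> D mod 4 = 1"

lemma the_dL:
  assumes "D \<noteq> 0" "fund_disc d" "L > 0" "D = d * L^2"
  shows "(THE (d, L). fund_disc d \<and> L \<ge> 0 \<and> D = d * L ^ 2) = (d, L)"
proof (rule the_equality)
  show "case (d, L) of (d, L) \<Rightarrow> fund_disc d \<and> L \<ge> 0 \<and> D = d * L ^ 2" using assms by simp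
next
  fix x assume h: "case x of (d, L) \<Rightarrow> fund_disc d \<and> (L::int) \<ge> 0 \<and> D = d * L ^ 2"
  obtain d' L' where x: "x = (d', L')" by (cases x)
  have "L' \<noteq> 0" using h x assms(1) by auto
  then have "L' > 0" using h x by auto
  then show "x = (d, L)" using fd_unique[of d' d L' L] h x assms by auto
qed

lemma psi_eq:
  assumes "D \<noteq> 0" "fund_disc d" "L > 0" "D = d * L^2"
  shows "psi D m = kronecker d (m div gcd m (nat L))"
  unfolding psi_def using assms the_dL[OF assms] by simp

lemma psi_prod_raw:
  assumes "D \<noteq> 0" "fund_disc d" "L > 0" "D = d * L^2" "m > 0"
  shows "psi D m = (\<Prod>p\<in>prime_factors m.
           kron_prime d p ^ (multiplicity p m - min (multiplicity p m) (multiplicity p (nat L))))"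
proof -
  define Ln where "Ln = nat L"
  define g where "g = gcd m Ln"
  define n where "n = m div g"
  have Ln0: "Ln \<noteq> 0" using assms(3) by (simp add: Ln_def)
  have g0: "g \<noteq> 0" using assms(5) by (simp add: g_def)
  have mgn: "m = g * n" unfolding n_def g_def by simp
  have n0: "n \<noteq> 0" using mgn assms(5) by auto
  have sub: "prime_factors n \<subseteq> prime_factors m"
    using mgn n0 g0 by (simp add: prime_factors_product)
  have eq: "kron_prime d p ^ (multiplicity p m - min (multiplicity p m) (multiplicity p Ln))
            = kron_prime d p ^ multiplicity p n" if "p \<in> prime_factors m" for p
  proof -
    have pp: "prime p" using that by auto
    have "multiplicity p g = min (multiplicity p m) (multiplicity p Ln)"
      unfolding g_def using multiplicity_gcd[OF _ Ln0 pp] assms(5) by simp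
    moreover have "multiplicity p m = multiplicity p g + multiplicity p n"
      using mgn prime_elem_multiplicity_mult_distrib[of p g n] pp g0 n0 by simp
    ultimately show ?thesis by simp
  qed
  have "psi D m = kronecker d n" using psi_eq[OF assms(1-4)] by (simp add: n_def g_def Ln_def)
  also have "\<dots> = (\<Prod>p\<in>prime_factors n. kron_prime d p ^ multiplicity p n)"
    by (simp add: kronecker_def)
  also have "\<dots> = (\<Prod>p\<in>prime_factors m. kron_prime d p ^ multiplicity p n)"
  proof (rule prod.mono_neutral_left[OF _ sub])
    show "finite (prime_factors m)" by simp
    show "\<forall>i\<in>prime_factors m - prime_factors n. kron_prime d i ^ multiplicity i n = 1"
      using n0 by (auto simp: in_prime_factors_iff not_dvd_imp_multiplicity_0)
  qed
  also have "\<dots> = (\<Prod>p\<in>prime_factors m.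
           kron_prime d p ^ (multiplicity p m - min (multiplicity p m) (multiplicity p Ln)))"
    using eq by (intro prod.cong) auto
  finally show ?thesis by (simp add: Ln_def)
qed

lemma psi_pp_raw:
  assumes "D \<noteq> 0" "fund_disc d" "L > 0" "D = d * L^2" "prime p" "k > 0"
  shows "psi D (p^k) = kron_prime d p ^ (k - min k (multiplicity p (nat L)))"
proof -
  have "psi D (p^k) = (\<Prod>q\<in>{p}.
           kron_prime d q ^ (multiplicity q (p^k) - min (multiplicity q (p^k)) (multiplicity q (nat L))))"
    using psi_prod_raw[OF assms(1-4), of "p^k"] assms(5,6)
    by (simp add: prime_factors_power prime_prime_factors prime_gt_0_nat)
  then show ?thesis using assms(5) by simp
qed

lemma psi_zero: "psi 0 m = 1" by (simp add: psi_def)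

lemma valid_dec:
  assumes "valid D" "D \<noteq> 0"
  obtains d L where "fund_disc d" "L > 0" "D = d * L^2"
  using fd_exists[of D] assms that unfolding valid_def by blast

lemma psi_prod:
  assumes "valid D" "m > 0"
  shows "psi D m = (\<Prod>p\<in>prime_factors m. psi D (p ^ multiplicity p m))"
proof (cases "D = 0")
  case True then show ?thesis by (simp add: psi_zero)
next
  case False
  obtain d L where dL: "fund_disc d" "L > 0" "D = d * L^2" using valid_dec assms(1) False by blast
  have X: "psi D (p ^ multiplicity p m) =
     kron_prime d p ^ (multiplicity p m - min (multiplicity p m) (multiplicity p (nat L)))"
    if "p \<in> prime_factors m" for p
  proof -
    have pp: "prime p" using that by auto
    have "multiplicity p m > 0" using that by (auto simp: prime_factors_multiplicity)
    then show ?thesis using psi_pp_raw[OF False dL pp] by blast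
  qed
  have "psi D m = (\<Prod>p\<in>prime_factors m.
           kron_prime d p ^ (multiplicity p m - min (multiplicity p m) (multiplicity p (nat L))))"
    by (rule psi_prod_raw[OF False dL assms(2)])
  also have "\<dots> = (\<Prod>p\<in>prime_factors m. psi D (p ^ multiplicity p m))"
    by (rule prod.cong[OF refl], rule sym, rule X)
  finally show ?thesis .
qed

lemma psi_mult:
  assumes "valid D" "a > 0" "b > 0" "coprime a b"
  shows "psi D (a * b) = psi D a * psi D b"
proof -
  have disj: "prime_factors a \<inter> prime_factors b = {}"
    using assms(4) by (auto simp: in_prime_factors_iff dest: coprime_common_divisor_nat)
  have ma: "multiplicity p (a*b) = multiplicity p a" if "p \<in> prime_factors a" for p
  proof -
    have "\<not> p dvd b" using that disj assms(3) by (auto simp: in_prime_factors_iff)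
    moreover have "prime p" using that by auto
    ultimately show ?thesis using assms(2,3)
      by (simp add: prime_elem_multiplicity_mult_distrib not_dvd_imp_multiplicity_0)
  qed
  have mb: "multiplicity p (a*b) = multiplicity p b" if "p \<in> prime_factors b" for p
  proof -
    have "\<not> p dvd a" using that disj assms(2) by (auto simp: in_prime_factors_iff)
    moreover have "prime p" using that by auto
    ultimately show ?thesis using assms(2,3)
      by (simp add: prime_elem_multiplicity_mult_distrib not_dvd_imp_multiplicity_0)
  qed
  have "psi D (a*b) = (\<Prod>p\<in>prime_factors a \<union> prime_factors b. psi D (p ^ multiplicity p (a*b)))"
    using psi_prod[OF assms(1), of "a*b"] assms(2,3) by (simp add: prime_factors_product)
  also have "\<dots> = (\<Prod>p\<in>prime_factors a. psi D (p ^ multiplicity p (a*b))) *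
                  (\<Prod>p\<in>prime_factors b. psi D (p ^ multiplicity p (a*b)))"
    by (rule prod.union_disjoint) (use disj in auto)
  also have "\<dots> = psi D a * psi D b"
    using psi_prod[OF assms(1,2)] psi_prod[OF assms(1,3)] ma mb by simp
  finally show ?thesis .
qed


lemma Leg_cong: "[a = b] (mod P) \<Longrightarrow> Legendre a P = Legendre b P"
proof -
  assume h: "[a = b] (mod P)"
  have "[a = 0] (mod P) \<longleftrightarrow> [b = 0] (mod P)"
    using h by (meson cong_sym cong_trans)
  moreover have "QuadRes P a \<longleftrightarrow> QuadRes P b"
    unfolding QuadRes_def using h by (meson cong_sym cong_trans)
  ultimately show ?thesis unfolding Legendre_def by simp
qed

lemma Leg_sq:
  assumes "prime (P::int)" "\<not> P dvd M"
  shows "Legendre (a * M^2) P = Legendre a P"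
proof -
  have cop: "coprime P M" using assms prime_imp_coprime by blast
  have "[a * M^2 = 0] (mod P) \<longleftrightarrow> [a = 0] (mod P)"
  proof -
    have "coprime P (M^2)" using cop by simp
    then have "P dvd a * M^2 \<longleftrightarrow> P dvd a" by (simp add: coprime_dvd_mult_left_iff)
    then show ?thesis by (simp add: cong_0_iff)
  qed
  moreover have "QuadRes P (a * M^2) \<longleftrightarrow> QuadRes P a"
  proof
    assume "QuadRes P a"
    then obtain y where y: "[y^2 = a] (mod P)" unfolding QuadRes_def by blast
    then have "[(y*M)^2 = a * M^2] (mod P)" by (simp add: power_mult_distrib cong_mult)
    then show "QuadRes P (a * M^2)" unfolding QuadRes_def by blast
  next
    assume "QuadRes P (a * M^2)"
    then obtain y where y: "[y^2 = a * M^2] (mod P)" unfolding QuadRes_def by blast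
    obtain N where N: "[M * N = 1] (mod P)" using cong_solve_coprime_int[of M P] cop
      by (auto simp: coprime_commute)
    have "[(y*N)^2 = a * M^2 * N^2] (mod P)" using y by (simp add: power_mult_distrib cong_mult)
    moreover have "a * M^2 * N^2 = a * (M * N)^2" by (simp add: power_mult_distrib)
    moreover have "[a * (M * N)^2 = a * 1^2] (mod P)" using N by (intro cong_mult cong_pow) auto
    ultimately have "[(y*N)^2 = a] (mod P)" by (metis cong_trans mult_1_right power_one)
    then show "QuadRes P a" unfolding QuadRes_def by blast
  qed
  ultimately show ?thesis unfolding Legendre_def by simp
qed

lemma Zodd:
  assumes "prime p" "odd p" "fund_disc d" "\<not> int p dvd Mi"
    and "int p ^ (2*j) dvd d * int p ^ (2*v) * Mi^2"
  shows "j \<le> v"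
proof (rule ccontr)
  assume "\<not> j \<le> v"
  then have "int p ^ (2*v+2) dvd int p ^ (2*j)" by (intro le_imp_power_dvd) simp
  moreover have "int p ^ (2*v) * int p ^ 2 = int p ^ (2*v+2)" by (rule power_add[symmetric])
  ultimately have X: "int p ^ (2*v) * int p ^ 2 dvd int p ^ (2*j)" by (simp only:)
  have eq: "d * int p ^ (2*v) * Mi^2 = int p ^ (2*v) * (d * Mi^2)" by (simp only: mult_ac)
  have Y: "int p ^ (2*j) dvd int p ^ (2*v) * (d * Mi^2)" using assms(5) unfolding eq .
  have "int p ^ (2*v) * int p ^ 2 dvd int p ^ (2*v) * (d * Mi^2)"
    by (rule dvd_trans[OF X Y])
  then have "int p ^ 2 dvd d * Mi^2" using assms(1) by simp
  moreover have "coprime (int p ^ 2) (Mi^2)"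
    using prime_imp_coprime[of "int p" Mi] assms(1,4) by simp
  ultimately have "int p ^ 2 dvd d" by (simp add: coprime_dvd_mult_left_iff)
  moreover have "odd (int p)" using assms(2) by simp
  ultimately show False using fd_odd_prime_sq[of d "int p"] assms(1,3) by simp
qed

lemma Lodd:
  assumes "prime p" "odd p" "k > 0"
    and "fund_disc d" "\<not> int p dvd Mi" "D = d * int p ^ (2*v) * Mi^2"
    and "fund_disc d'" "\<not> int p dvd Mi'" "D' = d' * int p ^ (2*v') * Mi'^2"
    and "[D = D'] (mod int p ^ (2*k))"
  shows "Legendre d (int p) ^ (k - min k v) = Legendre d' (int p) ^ (k - min k v')"
proof -
  let ?P = "int p"
  have Z: "j \<le> v" if "?P ^ (2*j) dvd D" for j using Zodd[OF assms(1,2,4,5)] that assms(6) by simp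
  have Z': "j \<le> v'" if "?P ^ (2*j) dvd D'" for j using Zodd[OF assms(1,2,7,8)] that assms(9) by simp
  have dvD: "?P ^ (2*j) dvd D" if "j \<le> v" for j
    using that assms(6) by (simp add: le_imp_power_dvd)
  have dvD': "?P ^ (2*j) dvd D'" if "j \<le> v'" for j
    using that assms(9) by (simp add: le_imp_power_dvd)
  have cg: "[D = D'] (mod ?P ^ (2*j))" if "j \<le> k" for j
    using assms(10) by (rule cong_dvd_modulus) (simp add: le_imp_power_dvd that)
  show ?thesis
  proof (cases "k \<le> v \<or> k \<le> v'")
    case True
    then have "k \<le> v \<and> k \<le> v'"
      using dvD dvD' Z Z' cong_dvd_iff[OF assms(10)] by blast
    then show ?thesis by simp
  next
    case False
    have vv: "v = v'"
    proof (rule ccontr)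
      assume "v \<noteq> v'"
      then have "v < v' \<or> v' < v" by arith
      then show False
      proof
        assume "v < v'"
        have h1: "?P ^ (2*(v+1)) dvd D'" using dvD'[of "v+1"] \<open>v < v'\<close> by simp
        have "v + 1 \<le> k" using False by simp
        then have "?P ^ (2*(v+1)) dvd D" using h1 cong_dvd_iff[OF cg[of "v+1"]] by blast
        then show False using Z by fastforce
      next
        assume "v' < v"
        have h1: "?P ^ (2*(v'+1)) dvd D" using dvD[of "v'+1"] \<open>v' < v\<close> by simp
        have "v' + 1 \<le> k" using False by simp
        then have "?P ^ (2*(v'+1)) dvd D'" using h1 cong_dvd_iff[OF cg[of "v'+1"]] by blast
        then show False using Z' by fastforce
      qed
    qed
    have "?P ^ (2*v) * ?P dvd ?P ^ (2*k)"
      using False by (simp add: power_Suc2[symmetric] le_imp_power_dvd del: power_Suc)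
    moreover have "?P ^ (2*k) dvd D - D'" using assms(10) cong_iff_dvd_diff by blast
    moreover have "D - D' = ?P ^ (2*v) * (d * Mi^2 - d' * Mi'^2)"
      using assms(6,9) vv by (simp add: algebra_simps)
    ultimately have "?P ^ (2*v) * ?P dvd ?P ^ (2*v) * (d * Mi^2 - d' * Mi'^2)"
      by (metis dvd_trans)
    then have "?P dvd d * Mi^2 - d' * Mi'^2" using assms(1) by simp
    then have "[d * Mi^2 = d' * Mi'^2] (mod ?P)" by (simp add: cong_iff_dvd_diff)
    then have "Legendre (d * Mi^2) ?P = Legendre (d' * Mi'^2) ?P" by (rule Leg_cong)
    then have "Legendre d ?P = Legendre d' ?P"
      using Leg_sq[of ?P Mi d] Leg_sq[of ?P Mi' d'] assms(1,5,8) by simp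
    then show ?thesis using vv by simp
  qed
qed


lemma oddsq8: "odd (x::int) \<Longrightarrow> x^2 mod 8 = 1"
proof -
  assume "odd x"
  then have "x mod 8 = 1 \<or> x mod 8 = 3 \<or> x mod 8 = 5 \<or> x mod 8 = 7" by presburger
  moreover have "x^2 mod 8 = (x mod 8)^2 mod 8" by (simp add: power_mod)
  ultimately show ?thesis by auto
qed

lemma rep2:
  assumes "fund_disc d" "odd Mi" "D = d * 2 ^ (2*v) * Mi^2"
  shows "\<exists>Y w. D = 4^w * Y \<and> \<not> 4 dvd Y \<and> (odd d \<longrightarrow> w = v \<and> Y mod 8 = d mod 8 \<and> Y mod 4 = 1)
           \<and> (even d \<longrightarrow> w = v + 1 \<and> Y mod 4 \<noteq> 1)"
proof -
  have p4: "(2::int) ^ (2*v) = 4 ^ v" by (simp add: power_mult)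
  have m8: "Mi^2 mod 8 = 1" using assms(2) by (rule oddsq8)
  from assms(1) show ?thesis
  proof (cases rule: fd_cases)
    case 1
    have od: "odd d" using 1(1) by presburger
    define Y where "Y = d * Mi^2"
    have "Y mod 8 = ((d mod 8) * (Mi^2 mod 8)) mod 8" unfolding Y_def by (simp add: mod_mult_eq)
    then have Y8: "Y mod 8 = d mod 8" using m8 by simp
    then have Y4: "Y mod 4 = 1" using 1(1) by presburger
    have "D = 4^v * Y" unfolding Y_def using assms(3) p4 by (simp add: mult_ac)
    moreover have "\<not> 4 dvd Y" using Y4 by presburger
    ultimately show ?thesis using od Y8 Y4 by blast
  next
    case (2 k)
    have ev: "even d" using 2(1) by simp
    define Y where "Y = k * Mi^2"
    have "Y mod 8 = ((k mod 8) * (Mi^2 mod 8)) mod 8" unfolding Y_def by (simp add: mod_mult_eq)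
    then have Y8: "Y mod 8 = k mod 8" using m8 by simp
    then have Y4: "Y mod 4 = 2 \<or> Y mod 4 = 3" using 2(2) by presburger
    have "D = 4^(v+1) * Y" unfolding Y_def using assms(3) p4 2(1) by (simp add: mult_ac)
    moreover have "\<not> 4 dvd Y" using Y4 by presburger
    ultimately show ?thesis using ev Y4 by auto
  qed
qed

lemma G4:
  assumes "\<not> 4 dvd (Y::int)" "4 ^ j dvd 4 ^ w * Y"
  shows "j \<le> w"
proof (rule ccontr)
  assume "\<not> j \<le> w"
  then have "(4::int) ^ (w+1) dvd 4 ^ j" by (intro le_imp_power_dvd) simp
  then have "(4::int) ^ w * 4 dvd 4 ^ w * Y" using assms(2) dvd_trans by (metis power_Suc2 Suc_eq_plus1)
  then have "4 dvd Y" by simp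
  then show False using assms(1) by simp
qed

lemma Z2:
  assumes "fund_disc d" "odd Mi" "D = d * 2 ^ (2*v) * Mi^2" "4 ^ (k+1) dvd D"
  shows "k \<le> v"
proof -
  obtain Y w where Yw: "D = 4^w * Y" "\<not> 4 dvd Y" "odd d \<longrightarrow> w = v" "even d \<longrightarrow> w = v + 1"
    using rep2[OF assms(1-3)] by blast
  have "k + 1 \<le> w" using G4[OF Yw(2)] assms(4) Yw(1) by simp
  then show ?thesis using Yw(3,4) by presburger
qed

lemma L2:
  assumes "k > 0"
    and "fund_disc d" "odd Mi" "D = d * 2 ^ (2*v) * Mi^2"
    and "fund_disc d'" "odd Mi'" "D' = d' * 2 ^ (2*v') * Mi'^2"
    and "[D = D'] (mod 4 ^ (k+1))"
  shows "kron_prime d 2 ^ (k - min k v) = kron_prime d' 2 ^ (k - min k v')"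
proof (cases "4 ^ (k+1) dvd D")
  case True
  then have "4 ^ (k+1) dvd D'" using cong_dvd_iff[OF assms(8)] by blast
  then have "k \<le> v \<and> k \<le> v'" using Z2[OF assms(2-4) True] Z2[OF assms(5-7)] by blast
  then show ?thesis by simp
next
  case False
  have F': "\<not> 4 ^ (k+1) dvd D'" using cong_dvd_iff[OF assms(8)] False by blast
  obtain Y w where Yw: "D = 4^w * Y" "\<not> 4 dvd Y"
     "odd d \<longrightarrow> w = v \<and> Y mod 8 = d mod 8 \<and> Y mod 4 = 1" "even d \<longrightarrow> w = v + 1 \<and> Y mod 4 \<noteq> 1"
    using rep2[OF assms(2-4)] by blast
  obtain Y' w' where Yw': "D' = 4^w' * Y'" "\<not> 4 dvd Y'"
     "odd d' \<longrightarrow> w' = v' \<and> Y' mod 8 = d' mod 8 \<and> Y' mod 4 = 1" "even d' \<longrightarrow> w' = v' + 1 \<and> Y' mod 4 \<noteq> 1"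
    using rep2[OF assms(5-7)] by blast
  have cg: "[D = D'] (mod 4 ^ j)" if "j \<le> k + 1" for j
    using assms(8) by (rule cong_dvd_modulus) (rule le_imp_power_dvd[OF that])
  have dv: "(4::int) ^ j dvd 4 ^ w * Y" if "j \<le> w" for j
    using that by (simp add: le_imp_power_dvd)
  have dv': "(4::int) ^ j dvd 4 ^ w' * Y'" if "j \<le> w'" for j
    using that by (simp add: le_imp_power_dvd)
  have wk: "w \<le> k" using dv[of "k+1"] False Yw(1) by force
  have wk': "w' \<le> k" using dv'[of "k+1"] F' Yw'(1) by force
  have ww: "w = w'"
  proof (rule ccontr)
    assume "w \<noteq> w'"
    then have "w < w' \<or> w' < w" by arith
    then show False
    proof
      assume "w < w'"
      then have "4 ^ (w+1) dvd D'" using dv'[of "w+1"] Yw'(1) by simp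
      then have "4 ^ (w+1) dvd D" using cong_dvd_iff[OF cg[of "w+1"]] wk by simp
      then show False using G4[OF Yw(2)] Yw(1) by fastforce
    next
      assume "w' < w"
      then have "4 ^ (w'+1) dvd D" using dv[of "w'+1"] Yw(1) by simp
      then have "4 ^ (w'+1) dvd D'" using cong_dvd_iff[OF cg[of "w'+1"]] wk' by simp
      then show False using G4[OF Yw'(2)] Yw'(1) by fastforce
    qed
  qed
  have diff: "D - D' = 4 ^ w * (Y - Y')" using Yw(1) Yw'(1) ww by (simp add: algebra_simps)
  have dj: "(4::int) ^ j dvd Y - Y'" if "j + w \<le> k + 1" for j
  proof -
    have "(4::int) ^ (w + j) dvd 4 ^ (k+1)"
      using that by (intro le_imp_power_dvd) simp
    then have "(4::int) ^ w * 4 ^ j dvd 4 ^ (k+1)" by (simp only: power_add)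
    moreover have "4 ^ (k+1) dvd 4 ^ w * (Y - Y')"
      using assms(8) diff cong_iff_dvd_diff by metis
    ultimately have "(4::int) ^ w * 4 ^ j dvd 4 ^ w * (Y - Y')" by (rule dvd_trans)
    then show ?thesis by simp
  qed
  have "4 dvd Y - Y'" using dj[of 1] wk by simp
  then have Y4: "Y mod 4 = Y' mod 4" by presburger
  show ?thesis
  proof (cases "odd d")
    case True
    then have T': "odd d'" using Yw(3) Yw'(4) Y4 by auto
    have vv: "v = v'" using Yw(3) Yw'(3) True T' ww by simp
    show ?thesis
    proof (cases "v = k")
      case True then show ?thesis using vv by simp
    next
      case False
      then have "v + 2 \<le> k + 1" using wk Yw(3) \<open>odd d\<close> by simp
      then have "16 dvd Y - Y'" using dj[of 2] Yw(3) \<open>odd d\<close> by simp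
      then have "Y mod 8 = Y' mod 8" by presburger
      then have "d mod 8 = d' mod 8" using Yw(3) Yw'(3) \<open>odd d\<close> T' by simp
      then have "kron_prime d 2 = kron_prime d' 2" unfolding kron_prime_def using \<open>odd d\<close> T' by simp
      then show ?thesis using vv by simp
    qed
  next
    case False
    then have T': "even d'" using Yw(4) Yw'(3) Y4 by auto
    have "v < k" "v' < k" using Yw(4) Yw'(4) False T' wk wk' by auto
    then show ?thesis using False T' unfolding kron_prime_def by (simp add: zero_power)
  qed
qed


lemma decomp:
  assumes "D \<noteq> 0" "valid D" "prime p"
  shows "\<exists>d Mi v. fund_disc d \<and> \<not> int p dvd Mi \<and> D = d * int p ^ (2*v) * Mi^2 \<and>
           (\<forall>k>0. psi D (p^k) = kron_prime d p ^ (k - min k v))"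
proof -
  obtain d L where dL: "fund_disc d" "L > 0" "D = d * L^2" using valid_dec assms(1,2) by blast
  define v where "v = multiplicity p (nat L)"
  obtain y where y: "nat L = p ^ v * y" "\<not> p dvd y"
  proof -
    have "nat L \<noteq> 0" "\<not> is_unit p" using dL(2) assms(3) by (auto simp: not_prime_unit)
    then show ?thesis using multiplicity_decompose'[of "nat L" p] that unfolding v_def by blast
  qed
  have "L = int (nat L)" using dL(2) by simp
  also have "\<dots> = int p ^ v * int y" using y(1) by simp
  finally have L: "L = int p ^ v * int y" .
  have "D = d * int p ^ (2*v) * (int y)^2"
    using dL(3) L by (simp add: power_mult_distrib power_mult[symmetric] mult_ac)
  moreover have "\<not> int p dvd int y" using y(2) by simp
  moreover have "\<forall>k>0. psi D (p^k) = kron_prime d p ^ (k - min k v)"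
    using psi_pp_raw[OF assms(1) dL assms(3)] unfolding v_def by blast
  ultimately show ?thesis using dL(1) by blast
qed

lemma psi_local_zero:
  assumes "valid D" "prime p" "k > 0" "4 * int p ^ (2*k) dvd D"
  shows "psi D (p^k) = 1"
proof (cases "D = 0")
  case True then show ?thesis by (simp add: psi_zero)
next
  case False
  obtain d Mi v where dec: "fund_disc d" "\<not> int p dvd Mi" "D = d * int p ^ (2*v) * Mi^2"
     "\<forall>k>0. psi D (p^k) = kron_prime d p ^ (k - min k v)"
    using decomp[OF False assms(1,2)] by blast
  have "k \<le> v"
  proof (cases "p = 2")
    case True
    have "(4::int) ^ (k+1) = 4 * int p ^ (2*k)" using True by (simp add: power_mult)
    then have "4 ^ (k+1) dvd D" using assms(4) by simp
    moreover have "odd Mi" using dec(2) True by simp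
    ultimately show ?thesis using Z2[OF dec(1) _ _] dec(3) True by simp
  next
    case False
    then have "odd p" using prime_odd_nat[OF assms(2)] prime_ge_2_nat[OF assms(2)] by simp
    moreover have "int p ^ (2*k) dvd D" using assms(4) dvd_mult_right by blast
    ultimately show ?thesis using Zodd[OF assms(2) _ dec(1,2)] dec(3) by simp
  qed
  then show ?thesis using dec(4) assms(3) by simp
qed

lemma psi_local:
  assumes "valid D" "valid D'" "prime p" "k > 0" "[D = D'] (mod 4 * int p ^ (2*k))"
  shows "psi D (p^k) = psi D' (p^k)"
proof (cases "D = 0 \<or> D' = 0")
  case True
  then show ?thesis
  proof
    assume D0: "D = 0"
    then have "4 * int p ^ (2*k) dvd D'" using assms(5) by (simp add: cong_0_iff cong_sym_eq)
    then show ?thesis using D0 psi_local_zero[OF assms(2-4)] by (simp add: psi_zero)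
  next
    assume D0: "D' = 0"
    then have "4 * int p ^ (2*k) dvd D" using assms(5) by (simp add: cong_0_iff)
    then show ?thesis using D0 psi_local_zero[OF assms(1,3,4)] by (simp add: psi_zero)
  qed
next
  case False
  obtain d Mi v where dec: "fund_disc d" "\<not> int p dvd Mi" "D = d * int p ^ (2*v) * Mi^2"
     "\<forall>k>0. psi D (p^k) = kron_prime d p ^ (k - min k v)"
    using decomp[of D p] False assms(1,3) by blast
  obtain d' Mi' v' where dec': "fund_disc d'" "\<not> int p dvd Mi'" "D' = d' * int p ^ (2*v') * Mi'^2"
     "\<forall>k>0. psi D' (p^k) = kron_prime d' p ^ (k - min k v')"
    using decomp[of D' p] False assms(2,3) by blast
  have "kron_prime d p ^ (k - min k v) = kron_prime d' p ^ (k - min k v')"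
  proof (cases "p = 2")
    case True
    have "(4::int) ^ (k+1) = 4 * int p ^ (2*k)" using True by (simp add: power_mult)
    then have c: "[D = D'] (mod 4 ^ (k+1))" using assms(5) by simp
    have "odd Mi" "odd Mi'" using dec(2) dec'(2) True by simp_all
    then show ?thesis using L2[OF assms(4) dec(1) _ _ dec'(1) _ _ c] dec(3) dec'(3) True by simp
  next
    case False
    then have op: "odd p" using prime_odd_nat[OF assms(3)] prime_ge_2_nat[OF assms(3)] by simp
    have c: "[D = D'] (mod int p ^ (2*k))"
      using assms(5) by (rule cong_dvd_modulus) simp
    show ?thesis using Lodd[OF assms(3) op assms(4) dec(1-3) dec'(1-3) c] False
      unfolding kron_prime_def by simp
  qed
  then show ?thesis using dec(4) dec'(4) assms(4) by simp
qed


lemma psi_periodic: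
  assumes "valid D" "valid D'" "m > 0" "[D = D'] (mod 4 * int m ^ 2)"
  shows "psi D m = psi D' m"
proof -
  have "psi D (p ^ multiplicity p m) = psi D' (p ^ multiplicity p m)" if "p \<in> prime_factors m" for p
  proof -
    have pp: "prime p" using that by auto
    have k0: "multiplicity p m > 0" using that by (auto simp: prime_factors_multiplicity)
    have "p ^ multiplicity p m dvd m" by (rule multiplicity_dvd)
    then have "(p ^ multiplicity p m)^2 dvd m^2" by (rule dvd_power_same)
    then have "int p ^ (2 * multiplicity p m) dvd int m ^ 2"
      by (metis of_nat_dvd_iff of_nat_power power_mult mult.commute)
    then have "4 * int p ^ (2 * multiplicity p m) dvd 4 * int m ^ 2" by simp
    then have "[D = D'] (mod 4 * int p ^ (2 * multiplicity p m))"
      using assms(4) cong_dvd_modulus by blast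
    then show ?thesis using psi_local[OF assms(1,2) pp k0] by blast
  qed
  then show ?thesis using psi_prod[OF assms(1,3)] psi_prod[OF assms(2,3)]
    by (metis (no_types, lifting) prod.cong)
qed

definition Dn :: "nat \<Rightarrow> int \<Rightarrow> nat \<Rightarrow> int" where
  "Dn l t n = t^2 - 4 * int l * int n"

lemma valid_Dn: "valid (Dn l t n)"
proof -
  have "t^2 mod 4 = 0 \<or> t^2 mod 4 = 1"
  proof (cases "even t")
    case True
    then obtain s where "t = 2 * s" by blast
    then show ?thesis by (simp add: power_mult_distrib)
  next
    case False
    then have "t^2 mod 8 = 1" by (rule oddsq8)
    then show ?thesis by presburger
  qed
  moreover have "Dn l t n mod 4 = t^2 mod 4"
  proof -
    have "Dn l t n = t^2 + 4 * (- int l * int n)" unfolding Dn_def by simp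
    then show ?thesis by (simp only:) presburger
  qed
  ultimately show ?thesis unfolding valid_def by simp
qed

lemma Dn_cong: "[Dn l t n = Dn l t (n mod a^2)] (mod 4 * int a ^ 2)"
proof -
  have "int n = int (n mod a^2) + int a ^ 2 * int (n div a^2)"
    by (metis of_nat_add of_nat_mult of_nat_power mod_div_mult_eq mult.commute add.commute)
  then have "Dn l t n - Dn l t (n mod a^2) = 4 * int a ^ 2 * (- int l * int (n div a^2))"
    unfolding Dn_def by (simp add: algebra_simps)
  then show ?thesis by (simp add: cong_iff_dvd_diff)
qed

definition SS :: "nat \<Rightarrow> nat set" where "SS m = {n \<in> {0..<m^2}. coprime n m}"

lemma coprime_sq_mod: "(m::nat) > 0 \<Longrightarrow> coprime n m \<longleftrightarrow> coprime (n mod m^2) m"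
proof -
  assume "m > 0"
  have "coprime n m \<longleftrightarrow> coprime n (m^2)" using coprime_power_right_iff[of n m 2] by simp
  also have "\<dots> \<longleftrightarrow> coprime (n mod m^2) (m^2)" using \<open>m > 0\<close> coprime_mod_left_iff[of "m^2" n] by simp
  also have "\<dots> \<longleftrightarrow> coprime (n mod m^2) m" using coprime_power_right_iff[of "n mod m^2" m 2] by simp
  finally show ?thesis .
qed

lemma bij_SS:
  assumes "a > 0" "b > 0" "coprime a b"
  shows "bij_betw (\<lambda>n. (n mod a^2, n mod b^2)) (SS (a*b)) (SS a \<times> SS b)"
proof -
  have cab: "coprime (a^2) (b^2)" using assms(3) by simp
  have a2: "a^2 \<noteq> 0" "b^2 \<noteq> 0" using assms by auto
  show ?thesis
  unfolding bij_betw_def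
proof
  show "inj_on (\<lambda>n. (n mod a^2, n mod b^2)) (SS (a*b))"
  proof (intro inj_onI, clarify)
    fix x y assume xy: "x \<in> SS (a*b)" "y \<in> SS (a*b)" "x mod a^2 = y mod a^2" "x mod b^2 = y mod b^2"
    have ex: "\<exists>!z. z < a^2 * b^2 \<and> [z = x] (mod a^2) \<and> [z = x] (mod b^2)"
      by (rule binary_chinese_remainder_unique_nat[OF cab a2])
    have "x < a^2 * b^2 \<and> [x = x] (mod a^2) \<and> [x = x] (mod b^2)"
         "y < a^2 * b^2 \<and> [y = x] (mod a^2) \<and> [y = x] (mod b^2)"
      using xy by (auto simp: SS_def cong_def power_mult_distrib)
    from this[THEN the1_equality[OF ex]] show "x = y" by simp
  qed
next
  show "(\<lambda>n. (n mod a^2, n mod b^2)) ` SS (a*b) = SS a \<times> SS b"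
  proof safe
    fix x assume x: "x \<in> SS (a*b)"
    then have "coprime x a" "coprime x b" by (auto simp: SS_def)
    then show "x mod a^2 \<in> SS a" "x mod b^2 \<in> SS b"
      using assms coprime_sq_mod[of a x] coprime_sq_mod[of b x] by (auto simp: SS_def)
  next
    fix u v assume uv: "u \<in> SS a" "v \<in> SS b"
    then have uv': "u < a^2" "v < b^2" by (auto simp: SS_def)
    obtain x where x: "x < a^2 * b^2" "[x = u] (mod a^2)" "[x = v] (mod b^2)"
      using binary_chinese_remainder_unique_nat[OF cab a2, of u v] by blast
    have xu: "x mod a^2 = u" "x mod b^2 = v" using x(2,3) uv' by (auto simp: cong_def)
    have "coprime x a" using coprime_sq_mod[of a x] xu uv assms by (simp add: SS_def)
    moreover have "coprime x b" using coprime_sq_mod[of b x] xu uv assms by (simp add: SS_def)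
    ultimately have "x \<in> SS (a*b)" using x(1) by (simp add: SS_def power_mult_distrib)
    then show "(u, v) \<in> (\<lambda>n. (n mod a^2, n mod b^2)) ` SS (a*b)" using xu by force
  qed
qed
qed

lemma psi_tilde_SS:
  "psi_tilde l t m = (\<Sum>n\<in>SS m. real_of_int (psi (Dn l t n) m)) / real (totient (m^2))"
  unfolding psi_tilde_def SS_def Dn_def by simp

theorem lemma3p1:
  fixes l :: nat and t :: int
  assumes "prime l" and "odd l"
  shows "psi_tilde l t 1 = 1 \<and>
         (\<forall>a b. a \<ge> 1 \<longrightarrow> b \<ge> 1 \<longrightarrow> coprime a b \<longrightarrow>
            psi_tilde l t (a * b) = psi_tilde l t a * psi_tilde l t b)"
proof (intro conjI allI impI)
  have "SS 1 = {0}" by (auto simp: SS_def)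
  moreover have "psi (Dn l t 0) 1 = 1" using psi_prod[OF valid_Dn, of 1] by simp
  ultimately show "psi_tilde l t 1 = 1" unfolding psi_tilde_SS by simp
next
  fix a b :: nat
  assume "a \<ge> 1" "b \<ge> 1" and cop: "coprime a b"
  then have ab: "a > 0" "b > 0" by auto
  define f where "f = (\<lambda>x. real_of_int (psi (Dn l t x) a))"
  define g where "g = (\<lambda>y. real_of_int (psi (Dn l t y) b))"
  have key: "real_of_int (psi (Dn l t n) (a*b)) = f (n mod a^2) * g (n mod b^2)" for n
  proof -
    have "psi (Dn l t n) (a*b) = psi (Dn l t n) a * psi (Dn l t n) b"
      by (rule psi_mult[OF valid_Dn ab cop])
    also have "psi (Dn l t n) a = psi (Dn l t (n mod a^2)) a"
      by (rule psi_periodic[OF valid_Dn valid_Dn ab(1) Dn_cong])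
    also have "psi (Dn l t n) b = psi (Dn l t (n mod b^2)) b"
      by (rule psi_periodic[OF valid_Dn valid_Dn ab(2) Dn_cong])
    finally show ?thesis unfolding f_def g_def by simp
  qed
  have "(\<Sum>n\<in>SS (a*b). real_of_int (psi (Dn l t n) (a*b)))
        = (\<Sum>n\<in>SS (a*b). (\<lambda>(x,y). f x * g y) (n mod a^2, n mod b^2))"
    using key by simp
  also have "\<dots> = (\<Sum>z\<in>SS a \<times> SS b. (\<lambda>(x,y). f x * g y) z)"
    by (rule sum.reindex_bij_betw[OF bij_SS[OF ab cop]])
  also have "\<dots> = (\<Sum>x\<in>SS a. \<Sum>y\<in>SS b. f x * g y)"
    by (rule sum.cartesian_product[symmetric])
  also have "\<dots> = sum f (SS a) * sum g (SS b)" by (rule sum_product[symmetric])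
  finally have num: "(\<Sum>n\<in>SS (a*b). real_of_int (psi (Dn l t n) (a*b))) = sum f (SS a) * sum g (SS b)" .
  have "totient ((a*b)^2) = totient (a^2) * totient (b^2)"
    using cop by (simp add: power_mult_distrib totient_mult_coprime)
  then have tot: "real (totient ((a*b)^2)) = real (totient (a^2)) * real (totient (b^2))" by simp
  show "psi_tilde l t (a * b) = psi_tilde l t a * psi_tilde l t b"
    unfolding psi_tilde_SS num tot f_def g_def by simp
qed

end
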